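(* Let $v$ be a nonzero vector of $\mathbb{F}_4^n$ and, for $1\le k\le n$, let $\sigma_k$ be the number of self-orthogonal additive codes over $\mathbb{F}_4$ of length $n$ and dimension $k$ containing $v$. Then \[ \sigma_k=\prod_{i=1}^{k-1}\frac{2^{2(n-i)}-1}{2^i-1} \] (with the empty product equal to $1$); in particular $\sigma_k$ does not depend on $v$.
   Context: $\mathbb{F}_4=\{0,1,\omega,\omega^2\}$ with $\omega^2=\omega+1$, $\bar x:=x^2$. Trace inner product $\langle u,v\rangle=\sum_{i}(u_i\bar v_i+\bar u_i v_i)\in\mathbb{F}_2$ on $\mathbb{F}_4^n$. An additive code of length $n$ is an $\mathbb{F}_2$-subspace of $\mathbb{F}_4^n$, with dimension meaning $\mathbb{F}_2$-dimension; $C^\perp$ is its dual under the trace inner product, and $C$ is self-orthogonal if $C\subseteq C^\perp$. *)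

theory Defs
  imports Complex_Main
begin

text \<open>The field F4 = {0, 1, w, w^2} with w^2 = w + 1.
  An element is identified with a + b w (a, b in F2).\<close>
datatype F4 = F4_0 | F4_1 | F4_w | F4_w2

fun f4_pair :: "F4 \<Rightarrow> bool \<times> bool" where
  "f4_pair F4_0 = (False, False)"
| "f4_pair F4_1 = (True, False)"
| "f4_pair F4_w = (False, True)"
| "f4_pair F4_w2 = (True, True)"

fun f4_of_pair :: "bool \<times> bool \<Rightarrow> F4" where
  "f4_of_pair (False, False) = F4_0"
| "f4_of_pair (True, False) = F4_1"
| "f4_of_pair (False, True) = F4_w"
| "f4_of_pair (True, True) = F4_w2"

definition f4_add :: "F4 \<Rightarrow> F4 \<Rightarrow> F4" where
  "f4_add x y = (case f4_pair x of (a, b) \<Rightarrow> case f4_pair y of (c, d) \<Rightarrow>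
      f4_of_pair (a \<noteq> c, b \<noteq> d))"

text \<open>(a + b w)(c + d w) = (ac + bd) + (ad + bc + bd) w\<close>
definition f4_mul :: "F4 \<Rightarrow> F4 \<Rightarrow> F4" where
  "f4_mul x y = (case f4_pair x of (a, b) \<Rightarrow> case f4_pair y of (c, d) \<Rightarrow>
      f4_of_pair ((a \<and> c) \<noteq> (b \<and> d), ((a \<and> d) \<noteq> (b \<and> c)) \<noteq> (b \<and> d)))"

definition f4_conj :: "F4 \<Rightarrow> F4" where
  "f4_conj x = f4_mul x x"

definition vecs :: "nat \<Rightarrow> (nat \<Rightarrow> F4) set" where
  "vecs n = {u. \<forall>i\<ge>n. u i = F4_0}"

definition vadd :: "(nat \<Rightarrow> F4) \<Rightarrow> (nat \<Rightarrow> F4) \<Rightarrow> nat \<Rightarrow> F4" where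
  "vadd u v = (\<lambda>i. f4_add (u i) (v i))"

definition trace_ip :: "nat \<Rightarrow> (nat \<Rightarrow> F4) \<Rightarrow> (nat \<Rightarrow> F4) \<Rightarrow> F4" where
  "trace_ip n u v = foldr f4_add
      (map (\<lambda>i. f4_add (f4_mul (u i) (f4_conj (v i))) (f4_mul (f4_conj (u i)) (v i))) [0..<n]) F4_0"

text \<open>Additive code of length n: an F2-subspace of F4^n, i.e. a nonempty
  subset closed under addition (scalars are only 0 and 1).\<close>
definition additive_code :: "nat \<Rightarrow> (nat \<Rightarrow> F4) set \<Rightarrow> bool" where
  "additive_code n C \<longleftrightarrow> C \<subseteq> vecs n \<and> (\<lambda>i. F4_0) \<in> C \<and> (\<forall>u\<in>C. \<forall>v\<in>C. vadd u v \<in> C)"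

definition code_dim :: "(nat \<Rightarrow> F4) set \<Rightarrow> nat \<Rightarrow> bool" where
  "code_dim C k \<longleftrightarrow> finite C \<and> card C = 2 ^ k"

definition self_orthogonal :: "nat \<Rightarrow> (nat \<Rightarrow> F4) set \<Rightarrow> bool" where
  "self_orthogonal n C \<longleftrightarrow> (\<forall>u\<in>C. \<forall>v\<in>C. trace_ip n u v = F4_0)"

end

theory Submission
  imports Defs
begin

definition tm :: "F4 \<Rightarrow> F4 \<Rightarrow> F4" where
  "tm a b = f4_add (f4_mul a (f4_conj b)) (f4_mul (f4_conj a) b)"

lemma f4_add_comm: "f4_add a b = f4_add b a"
  by (cases a; cases b; simp add: f4_add_def)
lemma f4_add_assoc: "f4_add (f4_add a b) c = f4_add a (f4_add b c)"
  by (cases a; cases b; cases c; simp add: f4_add_def)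
lemma f4_add_0 [simp]: "f4_add F4_0 a = a" "f4_add a F4_0 = a"
  by (cases a; simp add: f4_add_def)+
lemma f4_add_self [simp]: "f4_add a a = F4_0"
  by (cases a; simp add: f4_add_def)
lemma f4_add_11 [simp]: "f4_add F4_1 F4_1 = F4_0"
  by (simp add: f4_add_def)
lemma f4_add_swap: "f4_add (f4_add a b) (f4_add c d) = f4_add (f4_add a c) (f4_add b d)"
  by (cases a; cases b; cases c; cases d; simp add: f4_add_def)
lemma f4_add_cancel: "f4_add a (f4_add a b) = b"
  by (cases a; cases b; simp add: f4_add_def)

lemma tm_add: "tm (f4_add a b) c = f4_add (tm a c) (tm b c)"
  by (cases a; cases b; cases c; simp add: tm_def f4_add_def f4_mul_def f4_conj_def)
lemma tm_comm: "tm a b = tm b a"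
  by (cases a; cases b; simp add: tm_def f4_add_def f4_mul_def f4_conj_def)
lemma tm_self [simp]: "tm a a = F4_0"
  by (cases a; simp add: tm_def f4_add_def f4_mul_def f4_conj_def)
lemma tm_0 [simp]: "tm F4_0 a = F4_0" "tm a F4_0 = F4_0"
  by (cases a; simp add: tm_def f4_add_def f4_mul_def f4_conj_def)+
lemma tm_01: "tm a b = F4_0 \<or> tm a b = F4_1"
  by (cases a; cases b; simp add: tm_def f4_add_def f4_mul_def f4_conj_def)
lemma tm_ex: "b \<noteq> F4_0 \<Longrightarrow> \<exists>a. tm a b = F4_1"
proof (cases b)
  case F4_1 then show ?thesis by (intro exI[of _ F4_w]) (simp add: tm_def f4_add_def f4_mul_def f4_conj_def)
next
  case F4_w then show ?thesis by (intro exI[of _ F4_1]) (simp add: tm_def f4_add_def f4_mul_def f4_conj_def)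
next
  case F4_w2 then show ?thesis by (intro exI[of _ F4_1]) (simp add: tm_def f4_add_def f4_mul_def f4_conj_def)
qed auto

definition tip :: "nat list \<Rightarrow> (nat \<Rightarrow> F4) \<Rightarrow> (nat \<Rightarrow> F4) \<Rightarrow> F4" where
  "tip xs u v = foldr f4_add (map (\<lambda>i. tm (u i) (v i)) xs) F4_0"

lemma trace_ip_tip: "trace_ip n u v = tip [0..<n] u v"
  by (simp add: trace_ip_def tip_def tm_def)

lemma tip_Cons [simp]: "tip (x # xs) u v = f4_add (tm (u x) (v x)) (tip xs u v)"
  by (simp add: tip_def)
lemma tip_Nil [simp]: "tip [] u v = F4_0"
  by (simp add: tip_def)

lemma tip_add: "tip xs (vadd u w) v = f4_add (tip xs u v) (tip xs w v)"
  by (induction xs) (simp_all add: vadd_def tm_add f4_add_swap)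
lemma tip_comm: "tip xs u v = tip xs v u"
  by (induction xs) (simp_all add: tm_comm)
lemma tip_self [simp]: "tip xs u u = F4_0"
  by (induction xs) simp_all
lemma tip_01: "tip xs u v = F4_0 \<or> tip xs u v = F4_1"
proof (induction xs)
  case (Cons x xs)
  then show ?case using tm_01[of "u x" "v x"] by auto
qed simp
lemma tip_zero [simp]: "tip xs (\<lambda>i. F4_0) v = F4_0"
  by (induction xs) simp_all
lemma tip_single:
  assumes "\<And>j. j \<noteq> i \<Longrightarrow> e j = F4_0" "distinct xs"
  shows "tip xs e c = (if i \<in> set xs then tm (e i) (c i) else F4_0)"
  using assms(2)
proof (induction xs)
  case (Cons a xs)
  then show ?case by (cases "a = i") (auto simp: assms(1))
qed simp


abbreviation zv :: "nat \<Rightarrow> F4" where "zv \<equiv> (\<lambda>i. F4_0)"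

lemma vadd_comm: "vadd u w = vadd w u"
  by (simp add: vadd_def f4_add_comm)
lemma vadd_assoc: "vadd (vadd u w) x = vadd u (vadd w x)"
  by (simp add: vadd_def f4_add_assoc)
lemma vadd_self [simp]: "vadd u u = zv"
  by (simp add: vadd_def)
lemma vadd_zero [simp]: "vadd zv u = u" "vadd u zv = u"
  by (simp_all add: vadd_def)
lemma vadd_cancel [simp]: "vadd u (vadd u w) = w"
  by (simp add: vadd_def f4_add_cancel)
lemma vadd_vecs: "u \<in> vecs n \<Longrightarrow> w \<in> vecs n \<Longrightarrow> vadd u w \<in> vecs n"
  by (simp add: vecs_def vadd_def)
lemma zv_vecs [simp]: "zv \<in> vecs n"
  by (simp add: vecs_def)

lemma ip_add: "trace_ip n (vadd u w) v = f4_add (trace_ip n u v) (trace_ip n w v)"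
  by (simp add: trace_ip_tip tip_add)
lemma ip_comm: "trace_ip n u v = trace_ip n v u"
  by (simp add: trace_ip_tip tip_comm)
lemma ip_add2: "trace_ip n v (vadd u w) = f4_add (trace_ip n v u) (trace_ip n v w)"
  by (metis ip_comm ip_add)
lemma ip_self [simp]: "trace_ip n u u = F4_0"
  by (simp add: trace_ip_tip)
lemma ip_01: "trace_ip n u v \<noteq> F4_0 \<Longrightarrow> trace_ip n u v = F4_1"
  using tip_01 by (metis trace_ip_tip)
lemma ip_01': "trace_ip n u v = F4_0 \<or> trace_ip n u v = F4_1"
  using ip_01 by blast
lemma ip_zero [simp]: "trace_ip n zv v = F4_0" "trace_ip n v zv = F4_0"
  by (simp_all add: trace_ip_tip tip_comm[of _ v])

lemma UNIV_F4: "(UNIV :: F4 set) = {F4_0, F4_1, F4_w, F4_w2}"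
proof -
  have "x \<in> {F4_0, F4_1, F4_w, F4_w2}" for x by (cases x) auto
  then show ?thesis by blast
qed

lemma vecs_fin_card: "finite (vecs n) \<and> card (vecs n) = 4 ^ n"
proof -
  let ?r = "\<lambda>u. map u [0..<n]"
  let ?L = "{xs. set xs \<subseteq> (UNIV :: F4 set) \<and> length xs = n}"
  have inj: "inj_on ?r (vecs n)"
  proof (rule inj_onI)
    fix u w assume uw: "u \<in> vecs n" "w \<in> vecs n" "?r u = ?r w"
    show "u = w"
    proof
      fix i show "u i = w i"
      proof (cases "i < n")
        case True
        have "\<forall>x\<in>{0..<n}. u x = w x" using uw(3) by simp
        then show ?thesis using True by simp
      next
        case False then show ?thesis using uw(1,2) by (simp add: vecs_def)
      qed
    qed
  qed
  have img: "?r ` vecs n = ?L"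
  proof
    show "?r ` vecs n \<subseteq> ?L" by auto
    show "?L \<subseteq> ?r ` vecs n"
    proof
      fix xs assume f: "xs \<in> ?L"
      let ?u = "\<lambda>i. if i < n then xs ! i else F4_0"
      have uv: "?u \<in> vecs n" by (simp add: vecs_def)
      have xe: "?r ?u = xs" using f by (intro nth_equalityI) auto
      show "xs \<in> ?r ` vecs n" unfolding image_iff using uv xe by (intro bexI[of _ ?u]) auto
    qed
  qed
  have fin: "finite ?L" by (rule finite_lists_length_eq) (simp add: UNIV_F4)
  have c4: "card (UNIV :: F4 set) = 4" by (simp add: UNIV_F4)
  have c: "card ?L = 4 ^ n"
  proof -
    have "finite (UNIV :: F4 set)" by (simp add: UNIV_F4)
    then show ?thesis using card_lists_length_eq[of "UNIV :: F4 set" n] c4 by simp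
  qed
  have "finite (vecs n)" using finite_imageD[of ?r "vecs n"] inj img fin by simp
  moreover have "card (vecs n) = 4 ^ n" using card_image[OF inj] img c by metis
  ultimately show ?thesis by simp
qed

lemma nonzero_ex:
  assumes "c \<in> vecs n" "c \<noteq> zv"
  shows "\<exists>e\<in>vecs n. trace_ip n e c = F4_1"
proof -
  obtain i where ci: "c i \<noteq> F4_0" using assms(2) by auto
  have "i < n"
  proof (rule ccontr)
    assume "\<not> i < n"
    then have "c i = F4_0" using assms(1) by (simp add: vecs_def)
    with ci show False by simp
  qed
  obtain a where a: "tm a (c i) = F4_1" using tm_ex[OF ci] by auto
  let ?e = "\<lambda>j. if j = i then a else F4_0"
  have ev: "?e \<in> vecs n" using \<open>i < n\<close> by (auto simp: vecs_def)
  show ?thesis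
  proof (rule bexI[of _ ?e])
    show "?e \<in> vecs n" by (fact ev)
    have "tip [0..<n] ?e c = (if i \<in> set [0..<n] then tm (?e i) (c i) else F4_0)"
      by (rule tip_single) auto
    then show "trace_ip n ?e c = F4_1" using \<open>i < n\<close> a by (simp add: trace_ip_tip)
  qed
qed

lemma halving:
  assumes fin: "finite G" and cl: "\<And>a b. a \<in> G \<Longrightarrow> b \<in> G \<Longrightarrow> vadd a b \<in> G"
    and lin: "\<And>a b. a \<in> G \<Longrightarrow> b \<in> G \<Longrightarrow> f (vadd a b) = f4_add (f a) (f b)"
    and v01: "\<And>a. a \<in> G \<Longrightarrow> f a = F4_0 \<or> f a = F4_1"
    and gg: "gg \<in> G" "f gg = F4_1"
  shows "2 * card {g\<in>G. f g = F4_0} = card G"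
proof -
  let ?Z = "{g\<in>G. f g = F4_0}" and ?O = "{g\<in>G. f g = F4_1}"
  have un: "G = ?Z \<union> ?O" using v01 by auto
  have dj: "?Z \<inter> ?O = {}" by auto
  have inj: "inj_on (vadd gg) A" for A
    by (rule inj_onI) (metis vadd_cancel)
  have "vadd gg ` ?Z \<subseteq> ?O" using gg cl lin by auto
  then have c1: "card ?Z \<le> card ?O"
    using card_inj_on_le[OF inj] fin by (metis (no_types, lifting) finite_subset mem_Collect_eq subsetI)
  have "vadd gg ` ?O \<subseteq> ?Z" using gg cl lin by auto
  then have c2: "card ?O \<le> card ?Z"
    using card_inj_on_le[OF inj] fin by (metis (no_types, lifting) finite_subset mem_Collect_eq subsetI)
  have "card G = card ?Z + card ?O"
    using card_Un_disjoint[of ?Z ?O] fin un dj by (metis (no_types, lifting) finite_Un)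
  then show ?thesis using c1 c2 by simp
qed


definition perp :: "nat \<Rightarrow> (nat \<Rightarrow> F4) set \<Rightarrow> (nat \<Rightarrow> F4) set" where
  "perp n T = {w \<in> vecs n. \<forall>t\<in>T. trace_ip n w t = F4_0}"

lemma perp_count:
  assumes ac: "additive_code n C" and fC: "finite C"
  shows "card C * card (perp n C) = 4 ^ n"
proof -
  let ?V = "vecs n"
  let ?P = "perp n C"
  have fV: "finite ?V" and cV: "card ?V = 4 ^ n" using vecs_fin_card by auto
  have CV: "C \<subseteq> ?V" and z: "zv \<in> C" and cl: "\<And>a b. a \<in> C \<Longrightarrow> b \<in> C \<Longrightarrow> vadd a b \<in> C"
    using ac by (auto simp: additive_code_def)
  have PV: "?P \<subseteq> ?V" by (auto simp: perp_def)
  have h1: "2 * card {w\<in>?V. trace_ip n w c = F4_0} = 4 ^ n" if cc: "c \<in> ?V" "c \<noteq> zv" for c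
  proof -
    obtain e where e: "e \<in> ?V" "trace_ip n e c = F4_1" using nonzero_ex[OF cc] by blast
    have "2 * card {w\<in>?V. trace_ip n w c = F4_0} = card ?V"
    proof (rule halving[where gg=e])
    qed (auto simp: fV vadd_vecs ip_add ip_01' e)
    then show ?thesis using cV by simp
  qed
  have h0: "{w\<in>?V. trace_ip n w zv = F4_0} = ?V" by simp
  have h2: "{c\<in>C. trace_ip n w c = F4_0} = C" if "w \<in> ?P" for w
    using that by (auto simp: perp_def)
  have h3: "2 * card {c\<in>C. trace_ip n w c = F4_0} = card C" if w: "w \<in> ?V" "w \<notin> ?P" for w
  proof -
    obtain c0 where c0: "c0 \<in> C" "trace_ip n w c0 \<noteq> F4_0" using w by (auto simp: perp_def)
    then have c01: "trace_ip n w c0 = F4_1" using ip_01 by simp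
    show ?thesis
    proof (rule halving[where gg=c0])
    qed (auto simp: fC cl ip_add2 ip_01' c0 c01)
  qed
  let ?Q1 = "SIGMA c:C. {w\<in>?V. trace_ip n w c = F4_0}"
  let ?Q2 = "SIGMA w:?V. {c\<in>C. trace_ip n w c = F4_0}"
  have "?Q2 = prod.swap ` ?Q1" using CV by auto
  then have cQ: "card ?Q2 = card ?Q1" by (simp add: card_image)
  have "card ?Q1 = (\<Sum>c\<in>C. card {w\<in>?V. trace_ip n w c = F4_0})"
    using fC fV by (simp add: card_SigmaI)
  then have "2 * card ?Q1 = (\<Sum>c\<in>C. 2 * card {w\<in>?V. trace_ip n w c = F4_0})"
    by (simp add: sum_distrib_left)
  also have "\<dots> = 2 * card {w\<in>?V. trace_ip n w zv = F4_0} + (\<Sum>c\<in>C - {zv}. 2 * card {w\<in>?V. trace_ip n w c = F4_0})"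
    by (rule sum.remove[OF fC z])
  also have "(\<Sum>c\<in>C - {zv}. 2 * card {w\<in>?V. trace_ip n w c = F4_0}) = (\<Sum>c\<in>C - {zv}. 4 ^ n)"
    by (rule sum.cong) (use CV h1 in auto)
  finally have A: "2 * card ?Q1 = 2 * 4 ^ n + (card C - 1) * 4 ^ n"
    using h0 cV fC z by simp
  have "card ?Q2 = (\<Sum>w\<in>?V. card {c\<in>C. trace_ip n w c = F4_0})"
    using fC fV by (simp add: card_SigmaI)
  then have "2 * card ?Q2 = (\<Sum>w\<in>?V. 2 * card {c\<in>C. trace_ip n w c = F4_0})"
    by (simp add: sum_distrib_left)
  also have "\<dots> = (\<Sum>w\<in>?V. if w \<in> ?P then 2 * card C else card C)"
    by (rule sum.cong) (use h2 h3 in auto)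
  also have "\<dots> = (\<Sum>w\<in>?V \<inter> {w. w \<in> ?P}. 2 * card C) + (\<Sum>w\<in>?V \<inter> - {w. w \<in> ?P}. card C)"
    by (rule sum.If_cases[OF fV])
  also have "?V \<inter> {w. w \<in> ?P} = ?P" using PV by auto
  also have "?V \<inter> - {w. w \<in> ?P} = ?V - ?P" by auto
  finally have B0: "2 * card ?Q2 = card ?P * (2 * card C) + card (?V - ?P) * card C" by simp
  have "card (?V - ?P) = 4 ^ n - card ?P" using card_Diff_subset[OF finite_subset[OF PV fV] PV] cV by simp
  with B0 have B: "2 * card ?Q2 = card ?P * (2 * card C) + (4 ^ n - card ?P) * card C" by simp
  have pN: "card ?P \<le> 4 ^ n" using card_mono[OF fV PV] cV by simp
  have c1: "card C \<ge> 1" using z fC by (metis One_nat_def Suc_leI card_gt_0_iff empty_iff)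
  obtain d where d: "4 ^ n = card ?P + d" using pN le_Suc_ex by blast
  obtain c where c: "card C = Suc c" using c1 by (cases "card C") auto
  from A B cQ d c show ?thesis by (simp add: algebra_simps)
qed


lemma vadd_lc: "vadd a (vadd w b) = vadd w (vadd a b)"
  by (metis vadd_assoc vadd_comm)
lemma vadd_ww: "vadd (vadd w a) (vadd w b) = vadd a b"
  by (metis vadd_assoc vadd_cancel vadd_comm)

definition ext :: "(nat \<Rightarrow> F4) set \<Rightarrow> (nat \<Rightarrow> F4) \<Rightarrow> (nat \<Rightarrow> F4) set" where
  "ext T w = T \<union> vadd w ` T"

lemma ext_code:
  assumes "additive_code n T" "w \<in> vecs n"
  shows "additive_code n (ext T w)"
proof -
  have TV: "T \<subseteq> vecs n" and z: "zv \<in> T" and cl: "\<And>a b. a \<in> T \<Longrightarrow> b \<in> T \<Longrightarrow> vadd a b \<in> T"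
    using assms(1) by (auto simp: additive_code_def)
  have "ext T w \<subseteq> vecs n" using TV assms(2) vadd_vecs by (auto simp: ext_def)
  moreover have "zv \<in> ext T w" using z by (simp add: ext_def)
  moreover have "vadd a b \<in> ext T w" if ab: "a \<in> ext T w" "b \<in> ext T w" for a b
  proof -
    consider "a \<in> T" "b \<in> T" | a' where "a = vadd w a'" "a' \<in> T" "b \<in> T"
      | b' where "a \<in> T" "b = vadd w b'" "b' \<in> T"
      | a' b' where "a = vadd w a'" "a' \<in> T" "b = vadd w b'" "b' \<in> T"
    proof -
      have a: "a \<in> T \<or> (\<exists>a'\<in>T. a = vadd w a')" using ab(1) by (auto simp: ext_def)
      have b: "b \<in> T \<or> (\<exists>b'\<in>T. b = vadd w b')" using ab(2) by (auto simp: ext_def)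
      show thesis using a b that by blast
    qed
    then show ?thesis
    proof cases
      case 1 then show ?thesis using cl by (simp add: ext_def)
    next
      case (2 a') then show ?thesis using cl by (simp add: ext_def vadd_assoc)
    next
      case (3 b')
      then have e: "vadd a b = vadd w (vadd a b')" by (metis vadd_lc)
      have "vadd a b' \<in> T" using cl 3 by simp
      then show ?thesis unfolding e ext_def by blast
    next
      case (4 a' b') then show ?thesis using cl by (simp add: ext_def vadd_ww)
    qed
  qed
  ultimately show ?thesis by (simp add: additive_code_def)
qed

lemma ext_card:
  assumes "additive_code n T" "finite T" "w \<notin> T"
  shows "card (ext T w) = 2 * card T"
proof -
  have cl: "\<And>a b. a \<in> T \<Longrightarrow> b \<in> T \<Longrightarrow> vadd a b \<in> T"
    using assms(1) by (auto simp: additive_code_def)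
  have inj: "inj_on (vadd w) T" by (rule inj_onI) (metis vadd_cancel)
  have dj: "T \<inter> vadd w ` T = {}"
  proof (rule ccontr)
    assume "T \<inter> vadd w ` T \<noteq> {}"
    then obtain t t' where "t \<in> T" "t' \<in> T" "t = vadd w t'" by auto
    then have "vadd t t' = w" by (simp add: vadd_comm vadd_assoc)
    with cl \<open>t \<in> T\<close> \<open>t' \<in> T\<close> assms(3) show False by metis
  qed
  have "card (ext T w) = card T + card (vadd w ` T)"
    unfolding ext_def by (rule card_Un_disjoint) (use assms(2) dj in auto)
  then show ?thesis using card_image[OF inj] by simp
qed

lemma ext_SO:
  assumes "self_orthogonal n T" "w \<in> perp n T"
  shows "self_orthogonal n (ext T w)"
proof -
  have so: "\<And>a b. a \<in> T \<Longrightarrow> b \<in> T \<Longrightarrow> trace_ip n a b = F4_0" using assms(1) by (simp add: self_orthogonal_def)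
  have wp: "\<And>a. a \<in> T \<Longrightarrow> trace_ip n w a = F4_0" using assms(2) by (simp add: perp_def)
  then have wp': "\<And>a. a \<in> T \<Longrightarrow> trace_ip n a w = F4_0" by (metis ip_comm)
  have "trace_ip n a b = F4_0" if ab: "a \<in> ext T w" "b \<in> ext T w" for a b
  proof -
    consider "a \<in> T" "b \<in> T" | a' where "a = vadd w a'" "a' \<in> T" "b \<in> T"
      | b' where "a \<in> T" "b = vadd w b'" "b' \<in> T"
      | a' b' where "a = vadd w a'" "a' \<in> T" "b = vadd w b'" "b' \<in> T"
    proof -
      have a: "a \<in> T \<or> (\<exists>a'\<in>T. a = vadd w a')" using ab(1) by (auto simp: ext_def)
      have b: "b \<in> T \<or> (\<exists>b'\<in>T. b = vadd w b')" using ab(2) by (auto simp: ext_def)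
      show thesis using a b that by blast
    qed
    then show ?thesis
    proof cases
      case 1 then show ?thesis using so by simp
    next
      case (2 a') then show ?thesis using so wp by (simp add: ip_add)
    next
      case (3 b') then show ?thesis using so wp' by (simp add: ip_add2)
    next
      case (4 a' b') then show ?thesis using so wp wp' by (simp add: ip_add ip_add2)
    qed
  qed
  then show ?thesis by (simp add: self_orthogonal_def)
qed

fun spn :: "(nat \<Rightarrow> F4) set \<Rightarrow> (nat \<Rightarrow> F4) list \<Rightarrow> (nat \<Rightarrow> F4) set" where
  "spn S [] = S"
| "spn S (w # ws) = ext (spn S ws) w"

fun ind :: "((nat \<Rightarrow> F4) set \<Rightarrow> (nat \<Rightarrow> F4) set) \<Rightarrow> (nat \<Rightarrow> F4) set \<Rightarrow> (nat \<Rightarrow> F4) list \<Rightarrow> bool" where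
  "ind U S [] = True"
| "ind U S (w # ws) = (ind U S ws \<and> w \<in> U (spn S ws) \<and> w \<notin> spn S ws)"

definition LS :: "((nat \<Rightarrow> F4) set \<Rightarrow> (nat \<Rightarrow> F4) set) \<Rightarrow> (nat \<Rightarrow> F4) set \<Rightarrow> nat \<Rightarrow> (nat \<Rightarrow> F4) list set" where
  "LS U S m = {xs. length xs = m \<and> ind U S xs}"

lemma LS_count:
  "(\<And>xs. ind U S xs \<Longrightarrow> length xs < m \<Longrightarrow>
      finite (U (spn S xs) - spn S xs) \<and> card (U (spn S xs) - spn S xs) = f (length xs))
   \<Longrightarrow> finite (LS U S m) \<and> card (LS U S m) = (\<Prod>j<m. f j)"
proof (induction m)
  case 0
  have "LS U S 0 = {[]}" by (auto simp: LS_def)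
  then show ?case by simp
next
  case (Suc m)
  have IH: "finite (LS U S m)" "card (LS U S m) = (\<Prod>j<m. f j)"
    using Suc.IH Suc.prems by auto
  let ?g = "\<lambda>p. (snd p) # (fst p)"
  let ?Sg = "SIGMA xs: LS U S m. U (spn S xs) - spn S xs"
  have eq: "LS U S (Suc m) = ?g ` ?Sg"
  proof
    show "LS U S (Suc m) \<subseteq> ?g ` ?Sg"
    proof
      fix ys assume "ys \<in> LS U S (Suc m)"
      then obtain w xs where ys: "ys = w # xs" "length xs = m" "ind U S xs" "w \<in> U (spn S xs)" "w \<notin> spn S xs"
        by (auto simp: LS_def length_Suc_conv)
      then have "(xs, w) \<in> ?Sg" by (simp add: LS_def)
      then show "ys \<in> ?g ` ?Sg" using ys(1) by (intro rev_image_eqI[of "(xs, w)"]) auto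
    qed
    show "?g ` ?Sg \<subseteq> LS U S (Suc m)" by (auto simp: LS_def)
  qed
  have inj: "inj_on ?g ?Sg" by (auto simp: inj_on_def)
  have fin: "\<forall>xs\<in>LS U S m. finite (U (spn S xs) - spn S xs)" using Suc.prems by (auto simp: LS_def)
  have "card (LS U S (Suc m)) = card ?Sg" using eq card_image[OF inj] by simp
  also have "\<dots> = (\<Sum>xs\<in>LS U S m. card (U (spn S xs) - spn S xs))"
    using IH(1) fin by (simp add: card_SigmaI)
  also have "\<dots> = (\<Sum>xs\<in>LS U S m. f m)"
    by (rule sum.cong) (use Suc.prems in \<open>auto simp: LS_def\<close>)
  also have "\<dots> = (\<Prod>j<Suc m. f j)" using IH(2) by (simp add: mult.commute)
  finally show ?case using eq IH(1) fin by simp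
qed


lemma S_sub: "S \<subseteq> spn S xs"
  by (induction xs) (auto simp: ext_def)

lemma inv:
  assumes "ind (perp n) S xs" "additive_code n S" "self_orthogonal n S" "finite S" "card S = 2"
  shows "additive_code n (spn S xs) \<and> self_orthogonal n (spn S xs) \<and> finite (spn S xs)
         \<and> card (spn S xs) = 2 ^ Suc (length xs)"
  using assms(1)
proof (induction xs)
  case Nil then show ?case using assms by simp
next
  case (Cons w ws)
  then have IH: "additive_code n (spn S ws)" "self_orthogonal n (spn S ws)" "finite (spn S ws)"
    "card (spn S ws) = 2 ^ Suc (length ws)" and w: "w \<in> perp n (spn S ws)" "w \<notin> spn S ws"
    by auto
  have wv: "w \<in> vecs n" using w(1) by (simp add: perp_def)
  have "additive_code n (spn S (w # ws))" using ext_code[OF IH(1) wv] by simp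
  moreover have "self_orthogonal n (spn S (w # ws))" using ext_SO[OF IH(2) w(1)] by simp
  moreover have "finite (spn S (w # ws))" using IH(3) by (simp add: ext_def)
  moreover have "card (spn S (w # ws)) = 2 ^ Suc (length (w # ws))"
    using ext_card[OF IH(1) IH(3) w(2)] IH(4) by simp
  ultimately show ?case by blast
qed

lemma F1:
  assumes "ind (\<lambda>_. C) S xs" "S \<subseteq> C" "additive_code n C" "self_orthogonal n C"
  shows "ind (perp n) S xs \<and> spn S xs \<subseteq> C"
  using assms(1)
proof (induction xs)
  case Nil then show ?case using assms by simp
next
  case (Cons w ws)
  then have IH: "ind (perp n) S ws" "spn S ws \<subseteq> C" and w: "w \<in> C" "w \<notin> spn S ws" by auto
  have CV: "C \<subseteq> vecs n" and cl: "\<And>a b. a \<in> C \<Longrightarrow> b \<in> C \<Longrightarrow> vadd a b \<in> C"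
    using assms(3) by (auto simp: additive_code_def)
  have "w \<in> perp n (spn S ws)"
    using w(1) CV IH(2) assms(4) by (auto simp: perp_def self_orthogonal_def)
  moreover have "spn S (w # ws) \<subseteq> C" using IH(2) w(1) cl by (auto simp: ext_def)
  ultimately show ?case using IH w by simp
qed

lemma F2:
  assumes "ind (perp n) S xs" "spn S xs \<subseteq> C" "zv \<in> S"
  shows "ind (\<lambda>_. C) S xs"
  using assms(1,2)
proof (induction xs)
  case Nil then show ?case by simp
next
  case (Cons w ws)
  have sub: "spn S ws \<subseteq> C" using Cons.prems(2) by (auto simp: ext_def)
  have "zv \<in> spn S ws" using S_sub assms(3) by blast
  then have "vadd w zv \<in> vadd w ` spn S ws" by (rule imageI)
  then have "vadd w zv \<in> spn S (w # ws)" unfolding spn.simps ext_def by (rule UnI2)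
  then have "w \<in> C" using Cons.prems(2) by auto
  then show ?case using Cons sub by simp
qed


lemma main_nat:
  assumes vv: "v \<in> vecs n" and vz: "v \<noteq> zv" and km: "k = Suc m" and kn: "k \<le> n"
  shows "card {C. additive_code n C \<and> code_dim C k \<and> self_orthogonal n C \<and> v \<in> C}
           * (\<Prod>j<m. 2 ^ Suc m - 2 ^ Suc j) = (\<Prod>j<m. 2 ^ (2 * n - Suc j) - 2 ^ Suc j)"
proof -
  define X where "X = {C. additive_code n C \<and> code_dim C k \<and> self_orthogonal n C \<and> v \<in> C}"
  define S where "S = {zv, v}"
  have hS: "additive_code n S" using vv by (auto simp: S_def additive_code_def)
  have sS: "self_orthogonal n S" by (auto simp: S_def self_orthogonal_def)
  have fS: "finite S" and cS: "card S = 2" using vz by (auto simp: S_def)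
  have zS: "zv \<in> S" by (simp add: S_def)
  have fV: "finite (vecs n)" using vecs_fin_card by simp
  have p4: "(4::nat) ^ n = 2 ^ (2 * n)" by (simp add: power_mult)
  define B where "B = LS (perp n) S m"
  have cB: "finite B \<and> card B = (\<Prod>j<m. 2 ^ (2 * n - Suc j) - 2 ^ Suc j)"
    unfolding B_def
  proof (rule LS_count)
    fix xs assume xs: "ind (perp n) S xs" "length xs < m"
    define T where "T = spn S xs"
    define j where "j = length xs"
    have I: "additive_code n T" "self_orthogonal n T" "finite T" "card T = 2 ^ Suc j"
      using inv[OF xs(1) hS sS fS cS] by (auto simp: T_def j_def)
    have pc: "card T * card (perp n T) = 4 ^ n" by (rule perp_count[OF I(1) I(3)])
    have "Suc j + (2 * n - Suc j) = 2 * n" using xs(2) km kn j_def by simp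
    then have "(2::nat) ^ Suc j * 2 ^ (2 * n - Suc j) = 2 ^ (2 * n)" by (metis power_add)
    then have "2 ^ Suc j * card (perp n T) = 2 ^ Suc j * 2 ^ (2 * n - Suc j)"
      using pc I(4) p4 by simp
    then have cp: "card (perp n T) = 2 ^ (2 * n - Suc j)" by simp
    have TP: "T \<subseteq> perp n T" using I(1,2) by (auto simp: perp_def additive_code_def self_orthogonal_def)
    have fP: "finite (perp n T)" using fV by (rule finite_subset[rotated]) (auto simp: perp_def)
    show "finite (perp n (spn S xs) - spn S xs) \<and>
          card (perp n (spn S xs) - spn S xs) = 2 ^ (2 * n - Suc (length xs)) - 2 ^ Suc (length xs)"
      using card_Diff_subset[OF I(3) TP] fP cp I(4) by (simp add: T_def j_def)
  qed
  define fb where "fb C = LS (\<lambda>_. C) S m" for C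
  have cfb: "finite (fb C) \<and> card (fb C) = (\<Prod>j<m. 2 ^ Suc m - 2 ^ Suc j)" if C: "C \<in> X" for C
    unfolding fb_def
  proof (rule LS_count)
    have aC: "additive_code n C" and dC: "finite C" "card C = 2 ^ k" and sC: "self_orthogonal n C"
      and vC: "v \<in> C" using C by (auto simp: X_def code_dim_def)
    have SC: "S \<subseteq> C" using aC vC by (auto simp: S_def additive_code_def)
    fix xs assume xs: "ind (\<lambda>_. C) S xs" "length xs < m"
    have f1: "ind (perp n) S xs" "spn S xs \<subseteq> C" using F1[OF xs(1) SC aC sC] by auto
    have I: "finite (spn S xs)" "card (spn S xs) = 2 ^ Suc (length xs)"
      using inv[OF f1(1) hS sS fS cS] by auto
    show "finite (C - spn S xs) \<and> card (C - spn S xs) = 2 ^ Suc m - 2 ^ Suc (length xs)"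
      using card_Diff_subset[OF I(1) f1(2)] dC I(2) km by simp
  qed
  have BU: "B = (\<Union>C\<in>X. fb C)"
  proof
    show "B \<subseteq> (\<Union>C\<in>X. fb C)"
    proof
      fix xs assume "xs \<in> B"
      then have xs: "ind (perp n) S xs" "length xs = m" by (auto simp: B_def LS_def)
      define T where "T = spn S xs"
      have I: "additive_code n T" "self_orthogonal n T" "finite T" "card T = 2 ^ Suc m"
        using inv[OF xs(1) hS sS fS cS] xs(2) by (auto simp: T_def)
      have "v \<in> T" using S_sub[of S xs] by (auto simp: T_def S_def)
      then have TX: "T \<in> X" using I km by (auto simp: X_def code_dim_def)
      have "ind (\<lambda>_. T) S xs" using F2[OF xs(1) _ zS] by (simp add: T_def)
      then have "xs \<in> fb T" using xs(2) by (simp add: fb_def LS_def)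
      then show "xs \<in> (\<Union>C\<in>X. fb C)" using TX by blast
    qed
    show "(\<Union>C\<in>X. fb C) \<subseteq> B"
    proof
      fix xs assume "xs \<in> (\<Union>C\<in>X. fb C)"
      then obtain C where C: "C \<in> X" "xs \<in> fb C" by blast
      have aC: "additive_code n C" and sC: "self_orthogonal n C" and vC: "v \<in> C"
        using C(1) by (auto simp: X_def)
      have SC: "S \<subseteq> C" using aC vC by (auto simp: S_def additive_code_def)
      have "ind (\<lambda>_. C) S xs" "length xs = m" using C(2) by (auto simp: fb_def LS_def)
      then show "xs \<in> B" using F1[OF _ SC aC sC] by (auto simp: B_def LS_def)
    qed
  qed
  have spn_eq: "spn S xs = C" if "C \<in> X" "xs \<in> fb C" for C xs
  proof -
    have aC: "additive_code n C" and dC: "finite C" "card C = 2 ^ k" and sC: "self_orthogonal n C"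
      and vC: "v \<in> C" using that(1) by (auto simp: X_def code_dim_def)
    have SC: "S \<subseteq> C" using aC vC by (auto simp: S_def additive_code_def)
    have xs: "ind (\<lambda>_. C) S xs" "length xs = m" using that(2) by (auto simp: fb_def LS_def)
    have f1: "ind (perp n) S xs" "spn S xs \<subseteq> C" using F1[OF xs(1) SC aC sC] by auto
    have I: "card (spn S xs) = 2 ^ Suc m"
      using inv[OF f1(1) hS sS fS cS] xs(2) by auto
    show ?thesis using card_subset_eq[OF dC(1) f1(2)] I dC(2) km by simp
  qed
  have fX: "finite X"
  proof (rule finite_subset[of X "Pow (vecs n)"])
    show "X \<subseteq> Pow (vecs n)" by (auto simp: X_def additive_code_def)
  qed (use fV in simp)
  have "card B = (\<Sum>C\<in>X. card (fb C))"
    unfolding BU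
  proof (rule card_UN_disjoint[OF fX])
    show "\<forall>C\<in>X. finite (fb C)" using cfb by blast
    show "\<forall>C\<in>X. \<forall>C'\<in>X. C \<noteq> C' \<longrightarrow> fb C \<inter> fb C' = {}" using spn_eq by blast
  qed
  also have "\<dots> = (\<Sum>C\<in>X. (\<Prod>j<m. 2 ^ Suc m - 2 ^ Suc j))"
    by (rule sum.cong) (use cfb in auto)
  finally show ?thesis using cB by (simp add: X_def)
qed


theorem lemmaA2:
  fixes n k :: nat and v :: "nat \<Rightarrow> F4"
  assumes "v \<in> vecs n" and "v \<noteq> (\<lambda>i. F4_0)" and "1 \<le> k" and "k \<le> n"
  shows "real (card {C. additive_code n C \<and> code_dim C k \<and> self_orthogonal n C \<and> v \<in> C})
           = (\<Prod>i = 1..k - 1. (2 ^ (2 * (n - i)) - 1) / (2 ^ i - 1 :: real))"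
proof -
  obtain m where km: "k = Suc m" using assms(3) by (cases k) auto
  let ?X = "{C. additive_code n C \<and> code_dim C k \<and> self_orthogonal n C \<and> v \<in> C}"
  have N: "card ?X * (\<Prod>j<m. 2 ^ Suc m - 2 ^ Suc j) = (\<Prod>j<m. 2 ^ (2 * n - Suc j) - 2 ^ Suc j)"
    by (rule main_nat[OF assms(1) assms(2) km assms(4)])
  define a where "a j = (2::real) ^ (2 * (n - Suc j)) - 1" for j
  define b where "b j = (2::real) ^ Suc j - 1" for j
  define c where "c j = (2::real) ^ Suc j" for j
  have P1: "real (\<Prod>j<m. 2 ^ (2 * n - Suc j) - 2 ^ Suc j) = (\<Prod>j<m. c j * a j)"
    unfolding of_nat_prod
  proof (rule prod.cong[OF refl])
    fix j assume "j \<in> {..<m}"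
    then have j: "j < m" by simp
    have e: "2 * n - Suc j = Suc j + 2 * (n - Suc j)" using j km assms(4) by simp
    have le: "(2::nat) ^ Suc j \<le> 2 ^ (2 * n - Suc j)" unfolding e by simp
    have "real (2 ^ (2 * n - Suc j) - 2 ^ Suc j) = (2::real) ^ (2 * n - Suc j) - 2 ^ Suc j"
      using le by (simp add: of_nat_diff)
    also have "\<dots> = c j * a j" unfolding e a_def c_def by (simp add: power_add algebra_simps)
    finally show "real (2 ^ (2 * n - Suc j) - 2 ^ Suc j) = c j * a j" .
  qed
  have P2: "real (\<Prod>j<m. 2 ^ Suc m - 2 ^ Suc j) = (\<Prod>j<m. c j * b (m - Suc j))"
    unfolding of_nat_prod
  proof (rule prod.cong[OF refl])
    fix j assume "j \<in> {..<m}"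
    then have j: "j < m" by simp
    have e: "Suc m = Suc j + Suc (m - Suc j)" using j by simp
    have le: "(2::nat) ^ Suc j \<le> 2 ^ Suc m" using j by (simp del: power_Suc)
    have "real (2 ^ Suc m - 2 ^ Suc j) = (2::real) ^ Suc m - 2 ^ Suc j"
      using le by (simp add: of_nat_diff)
    also have "\<dots> = c j * b (m - Suc j)"
    proof -
      have "(2::real) ^ Suc m = 2 ^ Suc j * 2 ^ Suc (m - Suc j)" by (subst e) (rule power_add)
      then show ?thesis by (simp add: b_def c_def right_diff_distrib)
    qed
    finally show "real (2 ^ Suc m - 2 ^ Suc j) = c j * b (m - Suc j)" .
  qed
  have R: "(\<Prod>j<m. b (m - Suc j)) = (\<Prod>j<m. b j)" by (rule prod.nat_diff_reindex)
  have cnz: "(\<Prod>j<m. c j) \<noteq> 0" by (simp add: c_def)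
  have bnz: "(\<Prod>j<m. b j) \<noteq> 0"
  proof -
    have "b j \<noteq> 0" for j
    proof -
      have "(1::real) \<le> 2 ^ j" by simp
      then have "(2::real) ^ Suc j \<ge> 2" by simp
      then show ?thesis unfolding b_def by linarith
    qed
    then show ?thesis by simp
  qed
  have "real (card ?X) * ((\<Prod>j<m. c j) * (\<Prod>j<m. b j)) = (\<Prod>j<m. c j) * (\<Prod>j<m. a j)"
    using arg_cong[OF N, of real] P1 P2 R by (simp add: prod.distrib)
  then have "real (card ?X) * (\<Prod>j<m. b j) = (\<Prod>j<m. a j)"
    using cnz by (simp add: algebra_simps)
  then have "real (card ?X) = (\<Prod>j<m. a j) / (\<Prod>j<m. b j)"
    using bnz by (simp add: field_simps)
  also have "\<dots> = (\<Prod>j<m. a j / b j)" by (simp add: prod_dividef)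
  also have "\<dots> = (\<Prod>i = 1..k - 1. (2 ^ (2 * (n - i)) - 1) / (2 ^ i - 1 :: real))"
    unfolding km a_def b_def by (simp add: prod.atLeast1_atMost_eq)
  finally show ?thesis .
qed

end
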